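(* A compact $\mathbb{R}$-tree of infinite total length cannot be isometrically embedded into a finite-dimensional linear subspace of $L^1$ (of any measure space).
   Context: An $\mathbb{R}$-tree is a uniquely geodesic metric space (any two points $x,y$ are joined by a unique segment $\llbracket x,y\rrbracket$, i.e. a subset isometric to a compact interval with endpoints $x,y$) such that $\llbracket x,z\rrbracket\subseteq\llbracket x,y\rrbracket\cup\llbracket y,z\rrbracket$ for all $x,y,z$. Its skeleton is $\operatorname{Sk}(X)=\bigcup_{x,y}\llbracket x,y\rrbracket\setminus\{x,y\}$ and its total length is $\mathscr{H}^1(\operatorname{Sk}(X))\in[0,\infty]$, with $\mathscr H^1$ the one-dimensional Hausdorff measure. *)

theory Defs
  imports "HOL-Analysis.Analysis" "HOL-Probability.Probability"
begin

definition is_segment :: "'a::metric_space set \<Rightarrow> 'a \<Rightarrow> 'a \<Rightarrow> 'a set \<Rightarrow> bool" where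
  "is_segment X x y S \<longleftrightarrow> S \<subseteq> X \<and>
     (\<exists>\<gamma>::real \<Rightarrow> 'a. \<gamma> ` {0..dist x y} = S \<and> \<gamma> 0 = x \<and> \<gamma> (dist x y) = y \<and>
        (\<forall>s\<in>{0..dist x y}. \<forall>t\<in>{0..dist x y}. dist (\<gamma> s) (\<gamma> t) = \<bar>s - t\<bar>))"

definition R_tree :: "'a::metric_space set \<Rightarrow> bool" where
  "R_tree X \<longleftrightarrow>
     (\<forall>x\<in>X. \<forall>y\<in>X. \<exists>!S. is_segment X x y S) \<and>
     (\<forall>x\<in>X. \<forall>y\<in>X. \<forall>z\<in>X. \<forall>S1 S2 S3.
        is_segment X x y S1 \<longrightarrow> is_segment X y z S2 \<longrightarrow> is_segment X x z S3 \<longrightarrow>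
        S3 \<subseteq> S1 \<union> S2)"

definition skeleton :: "'a::metric_space set \<Rightarrow> 'a set" where
  "skeleton X = \<Union>{S - {x, y} | x y S. x \<in> X \<and> y \<in> X \<and> is_segment X x y S}"

definition hausdorff1_delta :: "real \<Rightarrow> 'a::metric_space set \<Rightarrow> ennreal" where
  "hausdorff1_delta \<delta> A =
     (INF C \<in> {C :: nat \<Rightarrow> 'a set. A \<subseteq> (\<Union>i. C i) \<and> (\<forall>i. bounded (C i) \<and> diameter (C i) \<le> \<delta>)}.
        (\<Sum>i. ennreal (diameter (C i))))"

definition hausdorff1 :: "'a::metric_space set \<Rightarrow> ennreal" where
  "hausdorff1 A = (SUP \<delta> \<in> {0<..}. hausdorff1_delta \<delta> A)"

end

theory Submission
  imports Defs
begin


definition Bet :: "'a::metric_space \<Rightarrow> 'a \<Rightarrow> 'a \<Rightarrow> bool" where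
  "Bet x p y \<longleftrightarrow> dist x p + dist p y = dist x y"

lemma seg_param:
  assumes "is_segment X x y S" "p \<in> S" "q \<in> S"
  shows "dist p q = \<bar>dist x p - dist x q\<bar>"
proof -
  obtain \<gamma> where g: "\<gamma> ` {0..dist x y} = S" "\<gamma> 0 = x" "\<gamma> (dist x y) = y"
    "\<forall>s\<in>{0..dist x y}. \<forall>t\<in>{0..dist x y}. dist (\<gamma> s) (\<gamma> t) = \<bar>s - t\<bar>"
    using assms(1) unfolding is_segment_def by blast
  obtain s t where st: "s \<in> {0..dist x y}" "t \<in> {0..dist x y}" "p = \<gamma> s" "q = \<gamma> t"
    using g(1) assms(2,3) by blast
  have z: "0 \<in> {0..dist x y}" by simp
  have "dist x p = s" using g(4) st z g(2) by (metis abs_of_nonneg atLeastAtMost_iff diff_zero dist_commute)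
  moreover have "dist x q = t" using g(4) st z g(2) by (metis abs_of_nonneg atLeastAtMost_iff diff_zero dist_commute)
  ultimately show ?thesis using g(4) st by simp
qed

lemma seg_ends:
  assumes "is_segment X x y S"
  shows "x \<in> S" "y \<in> S" "S \<subseteq> X"
proof -
  obtain \<gamma> where g: "\<gamma> ` {0..dist x y} = S" "\<gamma> 0 = x" "\<gamma> (dist x y) = y"
    using assms(1) unfolding is_segment_def by blast
  show "x \<in> S" using g by force
  show "y \<in> S" using g by (metis atLeastAtMost_iff image_eqI order_refl zero_le_dist)
  show "S \<subseteq> X" using assms unfolding is_segment_def by blast
qed

lemma seg_bet:
  assumes "is_segment X x y S" "p \<in> S"
  shows "Bet x p y"
proof -
  have "dist p y = \<bar>dist x p - dist x y\<bar>" using seg_param[OF assms(1) assms(2) seg_ends(2)[OF assms(1)]] .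
  moreover have "dist x p \<le> dist x y"
  proof -
    obtain \<gamma> where g: "\<gamma> ` {0..dist x y} = S" "\<gamma> 0 = x"
      "\<forall>s\<in>{0..dist x y}. \<forall>t\<in>{0..dist x y}. dist (\<gamma> s) (\<gamma> t) = \<bar>s - t\<bar>"
      using assms(1) unfolding is_segment_def by blast
    obtain s where "s \<in> {0..dist x y}" "p = \<gamma> s" using g(1) assms(2) by blast
    then show ?thesis using g(2,3) by (metis abs_of_nonneg atLeastAtMost_iff diff_zero dist_commute order.refl zero_le_dist)
  qed
  ultimately show ?thesis unfolding Bet_def by simp
qed

lemma seg_compact_connected:
  assumes "is_segment X x y S"
  shows "compact S" "connected S"
proof -
  obtain \<gamma> where g: "\<gamma> ` {0..dist x y} = S"
    "\<forall>s\<in>{0..dist x y}. \<forall>t\<in>{0..dist x y}. dist (\<gamma> s) (\<gamma> t) = \<bar>s - t\<bar>"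
    using assms(1) unfolding is_segment_def by blast
  have c: "continuous_on {0..dist x y} \<gamma>"
    unfolding continuous_on_iff
  proof (intro ballI allI impI)
    fix s e assume "s \<in> {0..dist x y}" "(0::real) < e"
    then show "\<exists>d>0. \<forall>t\<in>{0..dist x y}. dist t s < d \<longrightarrow> dist (\<gamma> t) (\<gamma> s) < e"
      using g(2) by (intro exI[of _ e]) (auto simp: dist_real_def)
  qed
  show "compact S" using compact_continuous_image[OF c] g(1) by auto
  show "connected S" using connected_continuous_image[OF c] g(1) by auto
qed

lemma RT_ex:
  assumes "R_tree X" "x \<in> X" "y \<in> X"
  obtains S where "is_segment X x y S"
  using assms unfolding R_tree_def by metis

lemma RT_union:
  assumes "R_tree X" "x \<in> X" "y \<in> X" "z \<in> X"
    "is_segment X x y S1" "is_segment X y z S2" "is_segment X x z S3"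
  shows "S3 \<subseteq> S1 \<union> S2"
  using assms unfolding R_tree_def by meson

lemma bet_seg:
  assumes T: "R_tree X" and xyp: "x \<in> X" "y \<in> X" "p \<in> X"
    and S: "is_segment X x y S" and B: "Bet x p y"
  shows "p \<in> S"
proof (rule ccontr)
  assume np: "p \<notin> S"
  obtain S1 where S1: "is_segment X x p S1" using RT_ex[OF T] xyp by metis
  obtain S2 where S2: "is_segment X p y S2" using RT_ex[OF T] xyp by metis
  have sub: "S \<subseteq> S1 \<union> S2" using RT_union[OF T _ _ _ S1 S2 S] xyp by blast
  have int: "S1 \<inter> S2 \<subseteq> {p}"
  proof
    fix q assume q: "q \<in> S1 \<inter> S2"
    have a: "Bet x q p" using seg_bet[OF S1] q by auto
    have b: "Bet p q y" using seg_bet[OF S2] q by auto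
    have "dist x y \<le> dist x q + dist q y" by (rule dist_triangle)
    then have "dist q p \<le> 0" using a b B unfolding Bet_def by (smt (verit) dist_commute)
    then show "q \<in> {p}" by simp
  qed
  have cl: "closed S1" "closed S2" using seg_compact_connected(1)[OF S1] seg_compact_connected(1)[OF S2] compact_imp_closed by auto
  have e: "S1 \<inter> S2 \<inter> S = {}" using int np by blast
  have n1: "S1 \<inter> S \<noteq> {}" using seg_ends(1)[OF S1] seg_ends(1)[OF S] by blast
  have n2: "S2 \<inter> S \<noteq> {}" using seg_ends(2)[OF S2] seg_ends(2)[OF S] by blast
  have "\<not> connected S"
    unfolding connected_closed using cl sub e n1 n2 by blast
  then show False using seg_compact_connected(2)[OF S] by blast
qed

lemma tripod:
  assumes T: "R_tree X" and p: "x \<in> X" "a \<in> X" "b \<in> X"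
  shows "\<exists>c\<in>X. Bet a c b \<and> Bet a c x \<and> Bet x c b"
proof -
  obtain S where S: "is_segment X a b S" using RT_ex[OF T] p by metis
  obtain S1 where S1: "is_segment X a x S1" using RT_ex[OF T] p by metis
  obtain S2 where S2: "is_segment X x b S2" using RT_ex[OF T] p by metis
  have sub: "S \<subseteq> S1 \<union> S2" using RT_union[OF T _ _ _ S1 S2 S] p by blast
  have cl: "closed S1" "closed S2" using seg_compact_connected(1)[OF S1] seg_compact_connected(1)[OF S2] compact_imp_closed by auto
  have n1: "S1 \<inter> S \<noteq> {}" using seg_ends(1)[OF S1] seg_ends(1)[OF S] by blast
  have n2: "S2 \<inter> S \<noteq> {}" using seg_ends(2)[OF S2] seg_ends(2)[OF S] by blast
  have "S1 \<inter> S2 \<inter> S \<noteq> {}"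
    using seg_compact_connected(2)[OF S] cl sub n1 n2 unfolding connected_closed by blast
  then obtain c where c: "c \<in> S1" "c \<in> S2" "c \<in> S" by blast
  show ?thesis using c seg_bet[OF S] seg_bet[OF S1] seg_bet[OF S2] seg_ends(3)[OF S] by blast
qed

lemma bet_point_seg:
  assumes T: "R_tree X" and xyp: "x \<in> X" "y \<in> X" "p \<in> X" and B: "Bet x p y"
  shows "\<exists>S. is_segment X x y S \<and> p \<in> S"
  using T xyp B bet_seg RT_ex by metis

lemma seg_order:
  assumes T: "R_tree X" and pts: "a \<in> X" "b \<in> X" "p \<in> X" "c \<in> X"
    and B1: "Bet a p b" and B2: "Bet a c b"
  shows "dist c p = \<bar>dist a p - dist a c\<bar>"
proof -
  obtain S where S: "is_segment X a b S" using RT_ex[OF T] pts by metis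
  have "p \<in> S" "c \<in> S" using bet_seg[OF T _ _ _ S] pts B1 B2 by auto
  then show ?thesis using seg_param[OF S] by (simp add: dist_commute)
qed

lemma bet_trans1: "Bet x y z \<Longrightarrow> Bet x p y \<Longrightarrow> Bet x p z"
  unfolding Bet_def by (smt (verit) dist_triangle)

lemma bet_trans2: "Bet x y z \<Longrightarrow> Bet y p z \<Longrightarrow> Bet x p z"
  unfolding Bet_def by (smt (verit) dist_triangle)

lemma bet_sym: "Bet x p y \<Longrightarrow> Bet y p x"
  unfolding Bet_def by (simp add: dist_commute add.commute)



definition leaf :: "'a::metric_space set \<Rightarrow> 'a \<Rightarrow> bool" where
  "leaf X x \<longleftrightarrow> x \<in> X \<and> \<not> (\<exists>a\<in>X. \<exists>b\<in>X. Bet a x b \<and> x \<noteq> a \<and> x \<noteq> b)"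

lemma skeleton_bet:
  assumes "p \<in> skeleton X"
  shows "p \<in> X \<and> (\<exists>a\<in>X. \<exists>b\<in>X. Bet a p b \<and> p \<noteq> a \<and> p \<noteq> b)"
proof -
  obtain x y S where "x \<in> X" "y \<in> X" "is_segment X x y S" "p \<in> S" "p \<noteq> x" "p \<noteq> y"
    using assms unfolding skeleton_def by blast
  then show ?thesis using seg_bet seg_ends(3) by blast
qed

lemma extend_step:
  assumes T: "R_tree X" and pts: "r \<in> X" "a \<in> X" "b \<in> X" "p \<in> X"
    and B: "Bet a p b" and na: "p \<noteq> a" and nb: "p \<noteq> b"
  shows "\<exists>y\<in>X. Bet r p y \<and> y \<noteq> p"
proof -
  obtain c where c: "c \<in> X" "Bet a c b" "Bet a c r" "Bet r c b"
    using tripod[OF T pts(1,2,3)] by blast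
  have o: "dist c p = \<bar>dist a p - dist a c\<bar>" using seg_order[OF T pts(2,3,4) c(1) B c(2)] .
  show ?thesis
  proof (cases "dist a c \<le> dist a p")
    case True
    have "Bet c p b" using o True B c(2) unfolding Bet_def by linarith
    then have "Bet r p b" using bet_trans2[OF c(4)] by blast
    then show ?thesis using pts nb by blast
  next
    case False
    have "Bet c p a" using o False B c(2) unfolding Bet_def by (simp add: dist_commute)
    moreover have "Bet r c a" using bet_sym[OF c(3)] .
    ultimately have "Bet r p a" using bet_trans2 by blast
    then show ?thesis using pts na by blast
  qed
qed

lemma extend_to_leaf:
  assumes T: "R_tree X" and K: "compact X" and r: "r \<in> X" and p: "p \<in> skeleton X"
  shows "\<exists>y. leaf X y \<and> Bet r p y"
proof -
  obtain a b where ab: "p \<in> X" "a \<in> X" "b \<in> X" "Bet a p b" "p \<noteq> a" "p \<noteq> b"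
    using skeleton_bet[OF p] by blast
  obtain y0 where y0: "y0 \<in> X" "Bet r p y0" using extend_step[OF T r ab(2,3,1,4,5,6)] by blast
  define Tt where "Tt = X \<inter> {y. dist r p + dist p y = dist r y}"
  have "closed {y. dist r p + dist p y = dist r y}"
    by (intro closed_Collect_eq continuous_intros)
  then have cT: "compact Tt" unfolding Tt_def using K by (simp add: compact_Int_closed)
  have neT: "Tt \<noteq> {}" using y0 unfolding Tt_def Bet_def by blast
  have "continuous_on Tt (dist r)" by (intro continuous_intros)
  then obtain y where y: "y \<in> Tt" "\<And>z. z \<in> Tt \<Longrightarrow> dist r z \<le> dist r y"
    using continuous_attains_sup[OF cT neT] by blast
  have yX: "y \<in> X" "Bet r p y" using y(1) unfolding Tt_def Bet_def by auto
  have "leaf X y"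
    unfolding leaf_def
  proof (intro conjI notI yX(1))
    assume "\<exists>a\<in>X. \<exists>b\<in>X. Bet a y b \<and> y \<noteq> a \<and> y \<noteq> b"
    then obtain a' b' where "a' \<in> X" "b' \<in> X" "Bet a' y b'" "y \<noteq> a'" "y \<noteq> b'" by blast
    then obtain y1 where y1: "y1 \<in> X" "Bet r y y1" "y1 \<noteq> y"
      using extend_step[OF T r _ _ yX(1)] by blast
    have "Bet r p y1" using bet_trans1[OF y1(2) yX(2)] .
    then have "y1 \<in> Tt" using y1(1) unfolding Tt_def Bet_def by auto
    then have "dist r y1 \<le> dist r y" using y(2) by blast
    moreover have "dist r y1 = dist r y + dist y y1" using y1(2) unfolding Bet_def by simp
    moreover have "dist y y1 > 0" using y1(3) by simp
    ultimately show False by linarith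
  qed
  then show ?thesis using yX by blast
qed

lemma leaf_family:
  assumes T: "R_tree X" and F: "finite F" "\<And>z. z \<in> F \<Longrightarrow> leaf X z" and x: "x \<in> F"
    and x1: "x1 \<in> F" "x1 \<noteq> x"
  shows "\<exists>b\<in>X. b \<noteq> x \<and> (\<forall>z\<in>F - {x}. Bet x b z)"
proof -
  have xX: "x \<in> X" and lx: "leaf X x" using F(2)[OF x] unfolding leaf_def by auto
  have x1X: "x1 \<in> X" using F(2)[OF x1(1)] unfolding leaf_def by auto
  have "\<forall>z\<in>F - {x}. \<exists>c. c \<in> X \<and> Bet x c z \<and> Bet x c x1 \<and> Bet x1 c z \<and> c \<noteq> x"
  proof
    fix z assume z: "z \<in> F - {x}"
    have zX: "z \<in> X" using F(2) z unfolding leaf_def by auto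
    obtain c where c: "c \<in> X" "Bet x c z" "Bet x c x1" "Bet x1 c z"
      using tripod[OF T x1X xX zX] by blast
    have "c \<noteq> x"
    proof
      assume cx: "c = x"
      show False
      proof (cases "z = x1")
        case True
        then have "dist x1 x + dist x x1 = 0" using c(4) cx unfolding Bet_def by simp
        then show False using x1(2) by (simp add: dist_commute)
      next
        case False
        then show False using lx c(4) cx x1X zX z x1(2) unfolding leaf_def by blast
      qed
    qed
    then show "\<exists>c. c \<in> X \<and> Bet x c z \<and> Bet x c x1 \<and> Bet x1 c z \<and> c \<noteq> x" using c by blast
  qed
  then obtain cf where cf: "\<And>z. z \<in> F - {x} \<Longrightarrow> cf z \<in> X \<and> Bet x (cf z) z \<and> Bet x (cf z) x1 \<and> cf z \<noteq> x"
    by metis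
  have fin: "finite (F - {x})" using F(1) by simp
  have ne: "F - {x} \<noteq> {}" using x1 by blast
  obtain z0 where "is_arg_min (\<lambda>z. dist x (cf z)) (\<lambda>z. z \<in> F - {x}) z0"
    using ex_is_arg_min_if_finite[OF fin ne] by blast
  then have z0: "z0 \<in> F - {x}" "\<And>z. z \<in> F - {x} \<Longrightarrow> dist x (cf z0) \<le> dist x (cf z)"
    unfolding is_arg_min_linorder by auto
  show ?thesis
  proof (intro bexI conjI ballI)
    show "cf z0 \<in> X" "cf z0 \<noteq> x" using cf[OF z0(1)] by auto
    fix z assume z: "z \<in> F - {x}"
    have o: "dist (cf z) (cf z0) = \<bar>dist x (cf z0) - dist x (cf z)\<bar>"
      using seg_order[OF T xX x1X] cf[OF z0(1)] cf[OF z] by blast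
    have "Bet x (cf z0) (cf z)" using o z0(2)[OF z] unfolding Bet_def by (simp add: dist_commute)
    then show "Bet x (cf z0) z" using bet_trans1 cf[OF z] by blast
  qed
qed



lemma diameter_le_metric:
  fixes S :: "'a::metric_space set"
  assumes "0 \<le> d" "\<And>x y. x \<in> S \<Longrightarrow> y \<in> S \<Longrightarrow> dist x y \<le> d"
  shows "diameter S \<le> d"
  using assms unfolding diameter_def by (auto intro: cSUP_least)

lemma hausdorff1_le:
  assumes "\<And>\<delta>. \<delta> > 0 \<Longrightarrow> hausdorff1_delta \<delta> S \<le> ennreal B"
  shows "hausdorff1 S \<noteq> \<infinity>"
proof -
  have "hausdorff1 S \<le> ennreal B" unfolding hausdorff1_def using assms by (auto intro: SUP_least)
  then have "hausdorff1 S < top" using ennreal_less_top[of B] by (rule order.strict_trans1)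
  then show ?thesis by auto
qed

lemma h1d_le:
  assumes "C \<in> {C :: nat \<Rightarrow> 'a::metric_space set. S \<subseteq> (\<Union>i. C i) \<and> (\<forall>i. bounded (C i) \<and> diameter (C i) \<le> \<delta>)}"
  shows "hausdorff1_delta \<delta> S \<le> (\<Sum>i. ennreal (diameter (C i)))"
  unfolding hausdorff1_delta_def using assms by (rule INF_lower)

lemma hausdorff1_empty: "hausdorff1 ({}::'a::metric_space set) \<noteq> \<infinity>"
proof (rule hausdorff1_le[of _ 0])
  fix \<delta> :: real assume d: "\<delta> > 0"
  let ?C = "\<lambda>i::nat. {}::'a set"
  have "?C \<in> {C :: nat \<Rightarrow> 'a set. {} \<subseteq> (\<Union>i. C i) \<and> (\<forall>i. bounded (C i) \<and> diameter (C i) \<le> \<delta>)}"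
    using d by auto
  note cin = this
  have "hausdorff1_delta \<delta> ({}::'a set) \<le> (\<Sum>i. ennreal (diameter (?C i)))"
    using h1d_le[OF cin] by simp
  then show "hausdorff1_delta \<delta> ({}::'a set) \<le> ennreal 0" by simp
qed

lemma H_bound:
  fixes X :: "'a::metric_space set"
  assumes T: "R_tree X" and K: "compact X" and r: "r \<in> X" and Lf: "finite Lf" "Lf \<subseteq> X"
    and cov: "\<And>p. p \<in> S \<Longrightarrow> p \<in> X \<and> (\<exists>y\<in>Lf. Bet r p y)"
  shows "hausdorff1 S \<noteq> \<infinity>"
proof -
  define D where "D = diameter X + 1"
  have bX: "bounded X" using K compact_imp_bounded by blast
  have dD: "\<And>q. q \<in> X \<Longrightarrow> dist r q < D"
    using diameter_bounded_bound[OF bX r] unfolding D_def by fastforce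
  have Dpos: "D > 0" using dD[OF r] by simp
  obtain ys where ys: "set ys = Lf" using finite_list[OF Lf(1)] by blast
  define k where "k = length ys"
  show ?thesis
  proof (rule hausdorff1_le[of _ "real k * D"])
    fix \<delta> :: real assume d: "\<delta> > 0"
    define N where "N = nat \<lceil>D / \<delta>\<rceil> + 1"
    have Npos: "N > 0" unfolding N_def by simp
    have "D / \<delta> < real N" unfolding N_def by linarith
    then have DN: "D / real N < \<delta>" using d Npos by (simp add: field_simps)
    define A where "A = (\<lambda>i (j::nat). {q \<in> X. Bet r q (ys!i) \<and> D * j / N \<le> dist r q \<and> dist r q \<le> D * (real j + 1) / N})"
    define C where "C = (\<lambda>m. if m < k * N then A (m div N) (m mod N) else {})"
    have CX: "C m \<subseteq> X" for m unfolding C_def A_def by auto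
    have cover: "S \<subseteq> (\<Union>m. C m)"
    proof
      fix p assume p: "p \<in> S"
      obtain y where y: "p \<in> X" "y \<in> Lf" "Bet r p y" using cov[OF p] by blast
      obtain i where i: "i < k" "ys ! i = y" using y(2) ys unfolding k_def by (metis in_set_conv_nth)
      define j where "j = nat \<lfloor>dist r p * N / D\<rfloor>"
      have q0: "0 \<le> dist r p * N / D" using Dpos by simp
      have q1: "dist r p * N / D < N" using dD[OF y(1)] Dpos Npos by (simp add: field_simps)
      have jN: "j < N" unfolding j_def using q0 q1 by (simp add: nat_less_iff floor_less_iff)
      have j1: "real j \<le> dist r p * N / D" unfolding j_def using q0 by linarith
      have j2: "dist r p * N / D < real j + 1" unfolding j_def using q0 by linarith
      have l1: "D * j / N \<le> dist r p" using j1 Dpos Npos by (simp add: field_simps)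
      have l2: "dist r p \<le> D * (real j + 1) / N" using j2 Dpos Npos by (simp add: field_simps)
      define m where "m = i * N + j"
      have "m < k * N"
      proof -
        have "i * N + N \<le> k * N" using i(1) by (metis add.commute mult_Suc Suc_leI mult_le_mono1)
        then show ?thesis unfolding m_def using jN by linarith
      qed
      moreover have "m div N = i" "m mod N = j" unfolding m_def using jN Npos by auto
      ultimately have "p \<in> C m" unfolding C_def A_def using y i l1 l2 by auto
      then show "p \<in> (\<Union>m. C m)" by blast
    qed
    have bnd: "bounded (C m)" for m using bounded_subset[OF bX CX] .
    have diam: "diameter (C m) \<le> D / N" for m
    proof (rule diameter_le_metric)
      show "0 \<le> D / real N" using Dpos by simp
      fix q q' assume qq: "q \<in> C m" "q' \<in> C m"
      then have mk: "m < k * N" unfolding C_def by (auto split: if_splits)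
      then have "m div N < k" by (simp add: less_mult_imp_div_less)
      then have yX: "ys ! (m div N) \<in> X" using ys Lf(2) unfolding k_def by auto
      have qA: "q \<in> A (m div N) (m mod N)" "q' \<in> A (m div N) (m mod N)" using qq mk unfolding C_def by auto
      have "dist q' q = \<bar>dist r q - dist r q'\<bar>"
        using seg_order[OF T r yX] qA unfolding A_def by blast
      moreover have "\<bar>dist r q - dist r q'\<bar> \<le> D * (real (m mod N) + 1) / N - D * (m mod N) / N"
        using qA unfolding A_def by auto
      moreover have "D * (real (m mod N) + 1) / N - D * (m mod N) / N = D / N"
        using Npos by (simp add: field_simps)
      ultimately show "dist q q' \<le> D / N" by (simp add: dist_commute)
    qed
    have dd: "diameter (C m) \<le> \<delta>" for m using diam[of m] DN by linarith
    have Cin: "C \<in> {C :: nat \<Rightarrow> 'a set. S \<subseteq> (\<Union>i. C i) \<and> (\<forall>i. bounded (C i) \<and> diameter (C i) \<le> \<delta>)}"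
      using cover bnd dd by auto
    have "(\<Sum>m. ennreal (diameter (C m))) = (\<Sum>m<k*N. ennreal (diameter (C m)))"
      by (rule suminf_finite) (auto simp: C_def)
    also have "\<dots> = ennreal (\<Sum>m<k*N. diameter (C m))"
      by (rule sum_ennreal) (simp add: diameter_ge_0 bnd)
    also have "\<dots> \<le> ennreal (real k * D)"
    proof (rule ennreal_leI)
      have "(\<Sum>m<k*N. diameter (C m)) \<le> of_nat (card {..<k*N}) * (D / N)"
        by (rule sum_bounded_above) (use diam in auto)
      also have "\<dots> = real k * D" using Npos by (simp add: field_simps)
      finally show "(\<Sum>m<k*N. diameter (C m)) \<le> real k * D" .
    qed
    finally have "(\<Sum>m. ennreal (diameter (C m))) \<le> ennreal (real k * D)" .
    moreover have "hausdorff1_delta \<delta> S \<le> (\<Sum>m. ennreal (diameter (C m)))"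
      using Cin by (rule h1d_le)
    ultimately show "hausdorff1_delta \<delta> S \<le> ennreal (real k * D)" by (rule order_trans[rotated])
  qed
qed



definition lin :: "(nat \<Rightarrow> 'b \<Rightarrow> real) \<Rightarrow> nat set \<Rightarrow> (nat \<Rightarrow> real) \<Rightarrow> 'b \<Rightarrow> real" where
  "lin g I c = (\<lambda>t. \<Sum>i\<in>I. c i * g i t)"

definition Nc :: "'b measure \<Rightarrow> (nat \<Rightarrow> 'b \<Rightarrow> real) \<Rightarrow> nat set \<Rightarrow> (nat \<Rightarrow> real) \<Rightarrow> real" where
  "Nc M g I c = (\<integral>t. \<bar>lin g I c t\<bar> \<partial>M)"

lemma lin_integrable:
  assumes "\<And>i. i \<in> I \<Longrightarrow> integrable M (g i)"
  shows "integrable M (lin g I c)"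
  unfolding lin_def by (intro Bochner_Integration.integrable_sum integrable_mult_right) (auto intro: assms)

lemma Nc_nonneg: "0 \<le> Nc M g I c"
  unfolding Nc_def by simp

lemma Nc_bound:
  assumes "\<And>i. i \<in> I \<Longrightarrow> integrable M (g i)"
  shows "Nc M g I c \<le> (\<Sum>i\<in>I. \<bar>c i\<bar> * (\<integral>t. \<bar>g i t\<bar> \<partial>M))"
proof -
  have "Nc M g I c \<le> (\<integral>t. (\<Sum>i\<in>I. \<bar>c i\<bar> * \<bar>g i t\<bar>) \<partial>M)"
    unfolding Nc_def
  proof (rule integral_mono)
    show "integrable M (\<lambda>t. \<bar>lin g I c t\<bar>)" using lin_integrable[OF assms] by auto
    show "integrable M (\<lambda>t. \<Sum>i\<in>I. \<bar>c i\<bar> * \<bar>g i t\<bar>)"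
      by (intro Bochner_Integration.integrable_sum integrable_mult_right integrable_abs) (auto intro: assms)
    fix t show "\<bar>lin g I c t\<bar> \<le> (\<Sum>i\<in>I. \<bar>c i\<bar> * \<bar>g i t\<bar>)"
      unfolding lin_def by (rule order_trans[OF sum_abs]) (simp add: abs_mult)
  qed
  also have "\<dots> = (\<Sum>i\<in>I. \<bar>c i\<bar> * (\<integral>t. \<bar>g i t\<bar> \<partial>M))"
    using assms by (subst Bochner_Integration.integral_sum) (auto intro!: integrable_mult_right)
  finally show ?thesis .
qed

lemma Nc_triangle:
  assumes "\<And>i. i \<in> I \<Longrightarrow> integrable M (g i)"
  shows "Nc M g I a \<le> Nc M g I b + Nc M g I (\<lambda>i. a i - b i)"
proof -
  have e: "lin g I a t = lin g I b t + lin g I (\<lambda>i. a i - b i) t" for t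
    unfolding lin_def by (simp add: sum.distrib[symmetric] algebra_simps)
  have "Nc M g I a \<le> (\<integral>t. \<bar>lin g I b t\<bar> + \<bar>lin g I (\<lambda>i. a i - b i) t\<bar> \<partial>M)"
    unfolding Nc_def
    by (rule integral_mono) (auto simp: e intro!: lin_integrable assms integrable_abs)
  also have "\<dots> = Nc M g I b + Nc M g I (\<lambda>i. a i - b i)"
    unfolding Nc_def using lin_integrable[OF assms] by (simp add: integrable_abs)
  finally show ?thesis .
qed

lemma BW_finite:
  fixes x :: "nat \<Rightarrow> nat \<Rightarrow> real"
  assumes "finite I" "\<And>k i. i \<in> I \<Longrightarrow> \<bar>x k i\<bar> \<le> 1"
  shows "\<exists>r l. strict_mono r \<and> (\<forall>i\<in>I. (\<lambda>k. x (r k) i) \<longlonglongrightarrow> l i)"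
  using assms
proof (induction I rule: finite_induct)
  case empty
  show ?case by (intro exI[of _ id]) (auto simp: strict_mono_def)
next
  case (insert j I)
  obtain r l where r: "strict_mono r" "\<forall>i\<in>I. (\<lambda>k. x (r k) i) \<longlonglongrightarrow> l i"
    using insert by blast
  have "bounded (range (\<lambda>k. x (r k) j))"
    using insert(4)[of j] unfolding bounded_iff by auto
  then obtain lj r' where r': "strict_mono r'" "((\<lambda>k. x (r k) j) \<circ> r') \<longlonglongrightarrow> lj"
    using bounded_imp_convergent_subsequence by blast
  show ?case
  proof (intro exI conjI ballI)
    show "strict_mono (r \<circ> r')" using r(1) r'(1) by (simp add: strict_mono_o)
    fix i assume i: "i \<in> insert j I"
    show "(\<lambda>k. x ((r \<circ> r') k) i) \<longlonglongrightarrow> (l(j := lj)) i"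
    proof (cases "i = j")
      case True
      then show ?thesis using r'(2) by (simp add: o_def)
    next
      case False
      then have "i \<in> I" using i by simp
      then have "((\<lambda>k. x (r k) i) \<circ> r') \<longlonglongrightarrow> l i" using r(2) LIMSEQ_subseq_LIMSEQ r'(1) by blast
      then show ?thesis using False by (simp add: o_def)
    qed
  qed
qed



lemma Nc_zero_AE:
  assumes "\<And>i. i \<in> I \<Longrightarrow> integrable M (g i)" "Nc M g I c = 0"
  shows "AE t in M. lin g I c t = 0"
proof -
  have "AE t in M. \<bar>lin g I c t\<bar> = 0"
    using assms(2) unfolding Nc_def
    using integral_nonneg_eq_0_iff_AE[of M "\<lambda>t. \<bar>lin g I c t\<bar>"] lin_integrable[OF assms(1)]
    by auto
  then show ?thesis by simp
qed

lemma Nc_scale: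
  assumes "s > 0"
  shows "Nc M g I (\<lambda>i. c i / s) = Nc M g I c / s"
proof -
  have "lin g I (\<lambda>i. c i / s) t = lin g I c t / s" for t
    unfolding lin_def by (simp add: sum_divide_distrib)
  then show ?thesis unfolding Nc_def using assms by simp
qed

lemma coeff_bound:
  assumes fin: "finite I" and ig: "\<And>i. i \<in> I \<Longrightarrow> integrable M (g i)"
    and ind: "\<And>a. (AE t in M. lin g I a t = 0) \<Longrightarrow> \<forall>i\<in>I. a i = 0"
  shows "\<exists>B. \<forall>c. Nc M g I c \<le> 1 \<longrightarrow> (\<Sum>i\<in>I. \<bar>c i\<bar>) \<le> B"
proof (rule ccontr)
  assume "\<not> ?thesis"
  then have "\<forall>k::nat. \<exists>c. Nc M g I c \<le> 1 \<and> (\<Sum>i\<in>I. \<bar>c i\<bar>) > real (Suc k)"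
    by (meson not_le)
  then obtain cs where cs: "\<And>k. Nc M g I (cs k) \<le> 1" "\<And>k. (\<Sum>i\<in>I. \<bar>cs k i\<bar>) > real (Suc k)"
    by metis
  define s where "s k = (\<Sum>i\<in>I. \<bar>cs k i\<bar>)" for k
  have spos: "s k > 0" for k using cs(2)[of k] unfolding s_def by linarith
  define d where "d k i = cs k i / s k" for k i
  have sum1: "(\<Sum>i\<in>I. \<bar>d k i\<bar>) = 1" for k
    using spos[of k] unfolding d_def s_def by (simp add: sum_divide_distrib[symmetric])
  have dle: "\<bar>d k i\<bar> \<le> 1" if "i \<in> I" for k i
    using member_le_sum[of i I "\<lambda>i. \<bar>d k i\<bar>"] that fin sum1[of k] by simp
  have Nd: "Nc M g I (d k) \<le> inverse (real (Suc k))" for k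
  proof -
    have "Nc M g I (d k) = Nc M g I (cs k) / s k"
      unfolding d_def using Nc_scale[OF spos[of k], of M g I "cs k"] by simp
    also have "\<dots> \<le> 1 / s k" using cs(1)[of k] spos[of k] by (simp add: divide_right_mono)
    also have "\<dots> \<le> inverse (real (Suc k))"
      using cs(2)[of k] spos[of k] unfolding s_def by (simp add: inverse_eq_divide frac_le)
    finally show ?thesis .
  qed
  obtain r l where r: "strict_mono r" "\<And>i. i \<in> I \<Longrightarrow> (\<lambda>k. d (r k) i) \<longlonglongrightarrow> l i"
    using BW_finite[of I d] fin dle by blast
  have "(\<lambda>k. \<Sum>i\<in>I. \<bar>d (r k) i\<bar>) \<longlonglongrightarrow> (\<Sum>i\<in>I. \<bar>l i\<bar>)"
    by (intro tendsto_intros r(2))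
  then have "(\<lambda>k. 1::real) \<longlonglongrightarrow> (\<Sum>i\<in>I. \<bar>l i\<bar>)" by (simp only: sum1)
  then have l1: "(\<Sum>i\<in>I. \<bar>l i\<bar>) = 1" using LIMSEQ_unique[OF tendsto_const] by metis
  define G where "G i = (\<integral>t. \<bar>g i t\<bar> \<partial>M)" for i
  define u where "u k = inverse (real (Suc (r k))) + (\<Sum>i\<in>I. \<bar>l i - d (r k) i\<bar> * G i)" for k
  have ule: "Nc M g I l \<le> u k" for k
  proof -
    have "Nc M g I l \<le> Nc M g I (d (r k)) + Nc M g I (\<lambda>i. l i - d (r k) i)"
      by (rule Nc_triangle[OF ig])
    also have "\<dots> \<le> u k"
    proof -
      have A: "Nc M g I (\<lambda>i. l i - d (r k) i) \<le> (\<Sum>i\<in>I. \<bar>l i - d (r k) i\<bar> * G i)"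
        unfolding G_def using ig by (rule Nc_bound)
      show ?thesis unfolding u_def using A Nd[of "r k"] by simp
    qed
    finally show ?thesis .
  qed
  have u0: "u \<longlonglongrightarrow> 0"
  proof -
    have a: "(\<lambda>k. inverse (real (Suc (r k)))) \<longlonglongrightarrow> 0"
      using LIMSEQ_subseq_LIMSEQ[OF LIMSEQ_inverse_real_of_nat r(1)] by (simp add: o_def)
    have b: "(\<lambda>k. \<Sum>i\<in>I. \<bar>l i - d (r k) i\<bar> * G i) \<longlonglongrightarrow> (\<Sum>i\<in>I. \<bar>l i - l i\<bar> * G i)"
      by (intro tendsto_intros r(2))
    show ?thesis unfolding u_def using tendsto_add[OF a b] by simp
  qed
  have "Nc M g I l \<le> 0"
    by (rule LIMSEQ_le_const[OF u0]) (use ule in blast)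
  then have "Nc M g I l = 0" using Nc_nonneg[of M g I l] by linarith
  then have "\<forall>i\<in>I. l i = 0" using ind[OF Nc_zero_AE[OF ig]] by blast
  then show False using l1 by simp
qed

lemma grid_bound:
  assumes fin: "finite I" and ig: "\<And>i. i \<in> I \<Longrightarrow> integrable M (g i)"
    and B: "\<And>c. Nc M g I c \<le> 1 \<Longrightarrow> (\<Sum>i\<in>I. \<bar>c i\<bar>) \<le> B"
  shows "\<exists>K. \<forall>(F::'x set) cf. finite F \<longrightarrow> (\<forall>x\<in>F. Nc M g I (cf x) = 1) \<longrightarrow>
            (\<forall>x\<in>F. \<forall>y\<in>F. x \<noteq> y \<longrightarrow> Nc M g I (\<lambda>i. cf x i - cf y i) = 2) \<longrightarrow> card F \<le> K"
proof -
  define G where "G = (\<Sum>i\<in>I. (\<integral>t. \<bar>g i t\<bar> \<partial>M))"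
  have G0: "G \<ge> 0" unfolding G_def by (intro sum_nonneg) simp
  define h where "h = 1 / (G + 1)"
  have hpos: "h > 0" unfolding h_def using G0 by simp
  have hG: "h * G < 1" unfolding h_def using G0 by (simp add: field_simps)
  define M0 where "M0 = \<lceil>B / h\<rceil>"
  define Z where "Z = PiE I (\<lambda>_. {-M0-1..M0})"
  have finZ: "finite Z" unfolding Z_def using fin by (intro finite_PiE) auto
  show ?thesis
  proof (intro exI[of _ "card Z"] allI impI)
    fix F :: "'x set" and cf
    assume F: "finite F" and n1: "\<forall>x\<in>F. Nc M g I (cf x) = 1"
      and n2: "\<forall>x\<in>F. \<forall>y\<in>F. x \<noteq> y \<longrightarrow> Nc M g I (\<lambda>i. cf x i - cf y i) = 2"
    define \<phi> where "\<phi> x = restrict (\<lambda>i. \<lfloor>cf x i / h\<rfloor>) I" for x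
    have inZ: "\<phi> x \<in> Z" if x: "x \<in> F" for x
    proof -
      have "(\<Sum>i\<in>I. \<bar>cf x i\<bar>) \<le> B" using B n1 x by simp
      then have ci: "\<bar>cf x i\<bar> \<le> B" if "i \<in> I" for i
        using member_le_sum[of i I "\<lambda>i. \<bar>cf x i\<bar>"] that fin by simp
      have "\<lfloor>cf x i / h\<rfloor> \<in> {-M0-1..M0}" if "i \<in> I" for i
      proof -
        have "\<bar>cf x i / h\<bar> \<le> B / h" using ci[OF that] hpos by (simp add: divide_right_mono)
        then have "- (B/h) \<le> cf x i / h" "cf x i / h \<le> B / h" by linarith+
        moreover have "B / h \<le> M0" unfolding M0_def by simp
        ultimately show ?thesis by (simp add: floor_le_iff le_floor_iff)
      qed
      then show ?thesis unfolding Z_def \<phi>_def by auto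
    qed
    have inj: "inj_on \<phi> F"
    proof (rule inj_onI, rule ccontr)
      fix x y assume xy: "x \<in> F" "y \<in> F" "\<phi> x = \<phi> y" "x \<noteq> y"
      have close: "\<bar>cf x i - cf y i\<bar> \<le> h" if i: "i \<in> I" for i
      proof -
        have "\<lfloor>cf x i / h\<rfloor> = \<lfloor>cf y i / h\<rfloor>" using xy(3) i unfolding \<phi>_def by (metis restrict_apply')
        then have "\<bar>cf x i / h - cf y i / h\<bar> < 1" by linarith
        then have "\<bar>cf x i - cf y i\<bar> / h < 1" using hpos by (simp add: diff_divide_distrib[symmetric])
        then show ?thesis using hpos by (simp add: field_simps)
      qed
      have "Nc M g I (\<lambda>i. cf x i - cf y i) \<le> (\<Sum>i\<in>I. \<bar>cf x i - cf y i\<bar> * (\<integral>t. \<bar>g i t\<bar> \<partial>M))"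
        by (rule Nc_bound[OF ig])
      also have "\<dots> \<le> (\<Sum>i\<in>I. h * (\<integral>t. \<bar>g i t\<bar> \<partial>M))"
        by (intro sum_mono mult_right_mono close) auto
      also have "\<dots> = h * G" unfolding G_def by (simp add: sum_distrib_left)
      finally show False using n2 xy hG by force
    qed
    show "card F \<le> card Z" using card_inj_on_le[OF inj _ finZ] inZ by blast
  qed
qed



lemma abs_sum_eq_imp: "\<bar>p\<bar> + \<bar>q\<bar> - \<bar>p + q\<bar> = (0::real) \<Longrightarrow> p * q \<ge> 0"
  by (cases "p \<ge> 0"; cases "q \<ge> 0") (auto simp: mult_nonneg_nonneg mult_nonpos_nonpos)

lemma L1_bet:
  fixes a b c :: "'b \<Rightarrow> real"
  assumes ia: "integrable M a" and ib: "integrable M b" and ic: "integrable M c"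
    and eq: "(\<integral>t. \<bar>a t - b t\<bar> \<partial>M) + (\<integral>t. \<bar>b t - c t\<bar> \<partial>M) = (\<integral>t. \<bar>a t - c t\<bar> \<partial>M)"
  shows "AE t in M. (a t - b t) * (b t - c t) \<ge> 0"
proof -
  define h where "h t = \<bar>a t - b t\<bar> + \<bar>b t - c t\<bar> - \<bar>a t - c t\<bar>" for t
  have i1: "integrable M (\<lambda>t. \<bar>a t - b t\<bar>)" using ia ib by auto
  have i2: "integrable M (\<lambda>t. \<bar>b t - c t\<bar>)" using ib ic by auto
  have i3: "integrable M (\<lambda>t. \<bar>a t - c t\<bar>)" using ia ic by auto
  have ih: "integrable M h" unfolding h_def using i1 i2 i3 by auto
  have hn: "AE t in M. 0 \<le> h t" unfolding h_def
    by (intro AE_I2) (smt (verit) abs_triangle_ineq)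
  have "integral\<^sup>L M h = (\<integral>t. \<bar>a t - b t\<bar> \<partial>M) + (\<integral>t. \<bar>b t - c t\<bar> \<partial>M) - (\<integral>t. \<bar>a t - c t\<bar> \<partial>M)"
    unfolding h_def using i1 i2 i3 by simp
  then have "integral\<^sup>L M h = 0" using eq by simp
  then have "AE t in M. h t = 0" using integral_nonneg_eq_0_iff_AE[OF ih hn] by simp
  then show ?thesis
  proof (rule AE_mp, intro AE_I2 impI)
    fix t assume "h t = 0"
    then show "(a t - b t) * (b t - c t) \<ge> 0"
      unfolding h_def using abs_sum_eq_imp[of "a t - b t" "b t - c t"] by simp
  qed
qed

lemma sign_combo:
  fixes fx fbx fy fby :: real
  assumes "(fx - fbx) * (fbx - fy) \<ge> 0" "(fy - fby) * (fby - fx) \<ge> 0"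
  shows "(fx - fbx) * (fy - fby) \<le> 0"
proof (rule ccontr)
  assume "\<not> ?thesis"
  then have "(fx - fbx) * (fy - fby) > 0" by simp
  then have "(fx > fbx \<and> fy > fby) \<or> (fx < fbx \<and> fy < fby)"
    by (simp add: zero_less_mult_iff)
  then show False
  proof
    assume h: "fx > fbx \<and> fy > fby"
    then have "fbx \<ge> fy" using assms(1) by (simp add: zero_le_mult_iff)
    moreover have "fby \<ge> fx" using h assms(2) by (simp add: zero_le_mult_iff)
    ultimately show False using h by linarith
  next
    assume h: "fx < fbx \<and> fy < fby"
    then have "fbx \<le> fy" using assms(1) by (simp add: zero_le_mult_iff)
    moreover have "fby \<le> fx" using h assms(2) by (simp add: zero_le_mult_iff)
    ultimately show False using h by linarith
  qed
qed

lemma lin_diff: "lin g I (\<lambda>i. a i - b i) t = lin g I a t - lin g I b t"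
  unfolding lin_def by (simp add: sum_subtractf algebra_simps)

lemma lin_div: "lin g I (\<lambda>i. a i / e) t = lin g I a t / e"
  unfolding lin_def by (simp add: sum_divide_distrib)

lemma int_cong_AE':
  fixes u v :: "'b \<Rightarrow> real"
  assumes "integrable M u" "integrable M v" "AE t in M. u t = v t"
  shows "integral\<^sup>L M u = integral\<^sup>L M v"
  using assms by (intro integral_cong_AE) auto



lemma abs_diff_nonpos: "a * b \<le> (0::real) \<Longrightarrow> \<bar>a - b\<bar> = \<bar>a\<bar> + \<bar>b\<bar>"
  unfolding mult_le_0_iff by auto


theorem proposition3p6:
  fixes X :: "'a::metric_space set" and M :: "'b measure"
  assumes "compact X" and "R_tree X" and "hausdorff1 (skeleton X) = \<infinity>"
  shows "\<not> (\<exists>(f :: 'a \<Rightarrow> 'b \<Rightarrow> real) (g :: nat \<Rightarrow> 'b \<Rightarrow> real) (n :: nat).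
            (\<forall>i<n. integrable M (g i)) \<and>
            (\<forall>x\<in>X. integrable M (f x) \<and>
                     (\<exists>c :: nat \<Rightarrow> real. AE t in M. f x t = (\<Sum>i<n. c i * g i t))) \<and>
            (\<forall>x\<in>X. \<forall>y\<in>X. dist x y = (\<integral>t. \<bar>f x t - f y t\<bar> \<partial>M)))"
proof
  assume "\<exists>(f :: 'a \<Rightarrow> 'b \<Rightarrow> real) (g :: nat \<Rightarrow> 'b \<Rightarrow> real) (n :: nat).
            (\<forall>i<n. integrable M (g i)) \<and>
            (\<forall>x\<in>X. integrable M (f x) \<and>
                     (\<exists>c :: nat \<Rightarrow> real. AE t in M. f x t = (\<Sum>i<n. c i * g i t))) \<and>
            (\<forall>x\<in>X. \<forall>y\<in>X. dist x y = (\<integral>t. \<bar>f x t - f y t\<bar> \<partial>M))"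
  then obtain f :: "'a \<Rightarrow> 'b \<Rightarrow> real" and g :: "nat \<Rightarrow> 'b \<Rightarrow> real" and n :: nat where
    ig0: "\<forall>i<n. integrable M (g i)" and
    fX: "\<forall>x\<in>X. integrable M (f x) \<and> (\<exists>c :: nat \<Rightarrow> real. AE t in M. f x t = (\<Sum>i<n. c i * g i t))" and
    dX: "\<forall>x\<in>X. \<forall>y\<in>X. dist x y = (\<integral>t. \<bar>f x t - f y t\<bar> \<partial>M)"
    by blast
  have T: "R_tree X" and K: "compact X" using assms by auto
  have intf: "\<And>x. x \<in> X \<Longrightarrow> integrable M (f x)" using fX by blast
  define P where "P J \<longleftrightarrow> J \<subseteq> {..<n} \<and> (\<forall>x\<in>X. \<exists>c. AE t in M. f x t = lin g J c t)" for J
  have "P {..<n}" unfolding P_def lin_def using fX by auto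
  then obtain I where PI: "P I" and Imin: "\<And>J. P J \<Longrightarrow> card I \<le> card J"
    using ex_has_least_nat[of P "{..<n}" card] by blast
  have Isub: "I \<subseteq> {..<n}" using PI unfolding P_def by blast
  have finI: "finite I" using Isub finite_subset by blast
  have ig: "\<And>i. i \<in> I \<Longrightarrow> integrable M (g i)" using Isub ig0 by blast
  have ind: "\<forall>i\<in>I. a i = 0" if az: "AE t in M. lin g I a t = 0" for a
  proof (rule ccontr)
    assume "\<not> (\<forall>i\<in>I. a i = 0)"
    then obtain i0 where i0: "i0 \<in> I" "a i0 \<noteq> 0" by blast
    define J where "J = I - {i0}"
    have "P J" unfolding P_def
    proof (intro conjI ballI)
      show "J \<subseteq> {..<n}" using Isub unfolding J_def by blast
      fix x assume x: "x \<in> X"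
      obtain c where c: "AE t in M. f x t = lin g I c t" using PI x unfolding P_def by blast
      define c' where "c' i = c i - c i0 / a i0 * a i" for i
      have e1: "lin g I c t = lin g I c' t + (c i0 / a i0) * lin g I a t" for t
        unfolding lin_def c'_def by (simp add: algebra_simps sum_distrib_left sum_subtractf)
      have e2: "lin g I c' t = lin g J c' t" for t
      proof -
        have "lin g I c' t = c' i0 * g i0 t + lin g J c' t"
          unfolding lin_def J_def using finI i0(1) by (simp add: sum.remove)
        moreover have "c' i0 = 0" unfolding c'_def using i0(2) by simp
        ultimately show ?thesis by simp
      qed
      have "AE t in M. f x t = lin g J c' t"
        using c az by eventually_elim (simp add: e1 e2)
      then show "\<exists>c. AE t in M. f x t = lin g J c t" by blast
    qed
    then have "card I \<le> card J" by (rule Imin)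
    moreover have "card J < card I" unfolding J_def by (rule card_Diff1_less[OF finI i0(1)])
    ultimately show False by simp
  qed
  obtain B where B: "\<And>c. Nc M g I c \<le> 1 \<Longrightarrow> (\<Sum>i\<in>I. \<bar>c i\<bar>) \<le> B"
    using coeff_bound[of I M g, OF finI ig ind] by blast
  obtain Kb where Kb: "\<And>(F::'a set) cf. finite F \<Longrightarrow> (\<forall>x\<in>F. Nc M g I (cf x) = 1) \<Longrightarrow>
            (\<forall>x\<in>F. \<forall>y\<in>F. x \<noteq> y \<longrightarrow> Nc M g I (\<lambda>i. cf x i - cf y i) = 2) \<Longrightarrow> card F \<le> Kb"
    using grid_bound[of I M g B, OF finI ig B, where 'x='a] by blast
  obtain cx where cx: "\<And>z. z \<in> X \<Longrightarrow> AE t in M. f z t = lin g I (cx z) t"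
    using PI unfolding P_def by metis
  have finL: "finite {x. leaf X x}"
  proof (rule ccontr)
    assume "infinite {x. leaf X x}"
    then obtain F where F: "finite F" "card F = Kb + 2" "F \<subseteq> {x. leaf X x}"
      using infinite_arbitrarily_large by blast
    have FX: "F \<subseteq> X" using F(3) unfolding leaf_def by blast
    have other: "\<exists>x1\<in>F. x1 \<noteq> x" if "x \<in> F" for x
    proof (rule ccontr)
      assume "\<not> ?thesis"
      then have "F \<subseteq> {x}" by blast
      then have "card F \<le> 1" using card_mono[of "{x}" F] by simp
      then show False using F(2) by simp
    qed
    have "\<forall>x\<in>F. \<exists>b\<in>X. b \<noteq> x \<and> (\<forall>z\<in>F - {x}. Bet x b z)"
      using leaf_family[OF T F(1)] F(3) other by blast
    then obtain bf where bf: "\<And>x. x \<in> F \<Longrightarrow> bf x \<in> X \<and> bf x \<noteq> x \<and> (\<forall>z\<in>F - {x}. Bet x (bf x) z)"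
      by metis
    define e where "e x = dist x (bf x)" for x
    have epos: "e x > 0" if "x \<in> F" for x using bf[OF that] unfolding e_def by (metis zero_less_dist_iff)
    define u where "u x t = f x t - f (bf x) t" for x t
    define cf where "cf x = (\<lambda>i. (cx x i - cx (bf x) i) / e x)" for x
    have intu: "integrable M (u x)" if "x \<in> F" for x
      unfolding u_def using intf bf[OF that] FX that by blast
    have lincf: "AE t in M. lin g I (cf x) t = u x t / e x" if x: "x \<in> F" for x
    proof -
      have "AE t in M. f x t = lin g I (cx x) t" using cx FX x by blast
      moreover have "AE t in M. f (bf x) t = lin g I (cx (bf x)) t" using cx bf[OF x] by blast
      ultimately show ?thesis
        by eventually_elim (simp add: cf_def u_def lin_div lin_diff)
    qed
    have intlin: "integrable M (lin g I c)" for c using lin_integrable[OF ig] .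
    have N1: "Nc M g I (cf x) = 1" if x: "x \<in> F" for x
    proof -
      have "Nc M g I (cf x) = (\<integral>t. \<bar>u x t\<bar> / e x \<partial>M)"
        unfolding Nc_def
        apply (rule int_cong_AE')
        using intlin intu[OF x] apply auto[2]
        using lincf[OF x] by eventually_elim (insert epos[OF x], simp add: abs_divide)
      also have "\<dots> = (\<integral>t. \<bar>u x t\<bar> \<partial>M) / e x" by simp
      also have "(\<integral>t. \<bar>u x t\<bar> \<partial>M) = e x"
        unfolding u_def e_def using dX FX x bf[OF x] by auto
      finally show ?thesis using epos[OF x] by simp
    qed
    have N2: "Nc M g I (\<lambda>i. cf x i - cf y i) = 2" if xy: "x \<in> F" "y \<in> F" "x \<noteq> y" for x y
    proof -
      have xX: "x \<in> X" "y \<in> X" using xy FX by auto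
      have b1: "Bet x (bf x) y" using bf[OF xy(1)] xy by blast
      have b2: "Bet y (bf y) x" using bf[OF xy(2)] xy by blast
      have s1: "AE t in M. (f x t - f (bf x) t) * (f (bf x) t - f y t) \<ge> 0"
        apply (rule L1_bet)
        using intf xX bf[OF xy(1)] apply auto[3]
        using b1 dX xX bf[OF xy(1)] unfolding Bet_def by auto
      have s2: "AE t in M. (f y t - f (bf y) t) * (f (bf y) t - f x t) \<ge> 0"
        apply (rule L1_bet)
        using intf xX bf[OF xy(2)] apply auto[3]
        using b2 dX xX bf[OF xy(2)] unfolding Bet_def by auto
      have s: "AE t in M. u x t * u y t \<le> 0"
        using s1 s2 by eventually_elim (simp add: u_def sign_combo)
      have "Nc M g I (\<lambda>i. cf x i - cf y i) = (\<integral>t. \<bar>u x t\<bar> / e x + \<bar>u y t\<bar> / e y \<partial>M)"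
        unfolding Nc_def
        apply (rule int_cong_AE')
        using intlin intu xy apply auto[2]
        using lincf[OF xy(1)] lincf[OF xy(2)] s
      proof eventually_elim
        case (elim t)
        have ee: "e x > 0" "e y > 0" using epos xy by auto
        have "u x t / e x * (u y t / e y) = (u x t * u y t) / (e x * e y)" by simp
        also have "\<dots> \<le> 0" using elim(3) ee by (intro divide_nonpos_pos) auto
        finally have p: "u x t / e x * (u y t / e y) \<le> 0" .
        have "lin g I (\<lambda>i. cf x i - cf y i) t = u x t / e x - u y t / e y"
          using elim(1,2) by (simp only: lin_diff)
        also have "\<bar>u x t / e x - u y t / e y\<bar> = \<bar>u x t / e x\<bar> + \<bar>u y t / e y\<bar>"
          using abs_diff_nonpos[OF p] .
        also have "\<dots> = \<bar>u x t\<bar> / e x + \<bar>u y t\<bar> / e y"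
          using ee by (simp add: abs_divide)
        finally show ?case .
      qed
      also have "\<dots> = (\<integral>t. \<bar>u x t\<bar> \<partial>M) / e x + (\<integral>t. \<bar>u y t\<bar> \<partial>M) / e y"
        using intu xy by simp
      also have "(\<integral>t. \<bar>u x t\<bar> \<partial>M) = e x"
        unfolding u_def e_def using dX xX bf[OF xy(1)] by auto
      also have "(\<integral>t. \<bar>u y t\<bar> \<partial>M) = e y"
        unfolding u_def e_def using dX xX bf[OF xy(2)] by auto
      finally show ?thesis using epos[OF xy(1)] epos[OF xy(2)] by simp
    qed
    have "card F \<le> Kb" using Kb[OF F(1)] N1 N2 by blast
    then show False using F(2) by simp
  qed
  have "hausdorff1 (skeleton X) \<noteq> \<infinity>"
  proof (cases "X = {}")
    case True
    then have "skeleton X = {}" unfolding skeleton_def by auto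
    then show ?thesis using hausdorff1_empty by simp
  next
    case False
    then obtain r where r: "r \<in> X" by blast
    show ?thesis
    proof (rule H_bound[OF T K r finL])
      show "{x. leaf X x} \<subseteq> X" unfolding leaf_def by blast
      fix p assume p: "p \<in> skeleton X"
      show "p \<in> X \<and> (\<exists>y\<in>{x. leaf X x}. Bet r p y)"
        using skeleton_bet[OF p] extend_to_leaf[OF T K r p] by blast
    qed
  qed
  then show False using assms(3) by simp
qed


end
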